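(* Let $K$ be a totally ordered quasi-field of characteristic $1$, $a\in K$, $n\ge1$, let $\varphi:K[X]\to E=K+KX+\dots+KX^{n-1}$ be the $K$-linear map with $\varphi(X^m)=a^qX^r$ for $m=nq+r$, $0\le r<n$, and let $J$ be the ideal of $K[X]$ generated by the $X^{nk}+a^k$, $k\ge1$. If $P,Q\in K[X]$ satisfy $\varphi(P)=\varphi(Q)$, then $P\equiv Q \pmod J$.
   Context: A quasi-field of characteristic $1$ is a commutative semiring $K$ with $1+1=1$ in which every nonzero element is multiplicatively invertible; it is ordered by $u\le v$ iff $u+v=v$, totally ordered meaning the order is total. Congruence modulo an ideal $J$ of $K[X]$: $P\equiv Q\pmod J$ iff $(P+J)\cap(Q+J)\neq\emptyset$ and for all $U\in J$ and $V\in K[X]$: $PU+V\in J\iff QU+V\in J$. *)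

theory Defs
  imports "HOL-Computational_Algebra.Polynomial"
begin

definition quasi_field_char1 :: "'a::comm_semiring_1 itself \<Rightarrow> bool" where
  "quasi_field_char1 _ \<longleftrightarrow>
     (1::'a) + 1 = 1 \<and> (\<forall>x::'a. x \<noteq> 0 \<longrightarrow> (\<exists>y. x * y = 1))"

definition sr_le :: "'a::comm_semiring_1 \<Rightarrow> 'a \<Rightarrow> bool" where
  "sr_le u v \<longleftrightarrow> u + v = v"

definition totally_ordered_sr :: "'a::comm_semiring_1 itself \<Rightarrow> bool" where
  "totally_ordered_sr _ \<longleftrightarrow> (\<forall>u v::'a. sr_le u v \<or> sr_le v u)"

definition gen_ideal_sr :: "'a::comm_semiring_1 set \<Rightarrow> 'a set" where
  "gen_ideal_sr G = {P. \<exists>(N::nat) F g. (\<forall>i<N. g i \<in> G) \<and> P = (\<Sum>i<N. F i * g i)}"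

definition cong_ideal :: "'a::comm_semiring_1 set \<Rightarrow> 'a \<Rightarrow> 'a \<Rightarrow> bool" where
  "cong_ideal J P Q \<longleftrightarrow>
     (\<exists>U\<in>J. \<exists>V\<in>J. P + U = Q + V) \<and>
     (\<forall>U\<in>J. \<forall>V. P * U + V \<in> J \<longleftrightarrow> Q * U + V \<in> J)"

definition phi :: "nat \<Rightarrow> 'a::comm_semiring_1 \<Rightarrow> 'a poly \<Rightarrow> 'a poly" where
  "phi n a P = (\<Sum>m\<le>degree P. monom (coeff P m * a ^ (m div n)) (m mod n))"

definition Jideal :: "nat \<Rightarrow> 'a::comm_semiring_1 \<Rightarrow> 'a poly set" where
  "Jideal n a = gen_ideal_sr {monom 1 (n * k) + [:a ^ k:] | k. k \<ge> 1}"

end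

theory Submission imports Defs begin

locale QF =
  fixes n :: nat and a :: "'a::comm_semiring_1"
  assumes one_one: "(1::'a) + 1 = 1"
    and tot: "\<And>u v::'a. u + v = v \<or> v + u = u"
    and invx: "\<And>x::'a. x \<noteq> 0 \<Longrightarrow> \<exists>y. x * y = 1"
    and n1: "n \<ge> 1"
begin

lemma idem[simp]: "(x::'a) + x = x"
  by (metis distrib_left mult.right_neutral one_one)

lemma tot2: "(x::'a) + y = y \<or> x + y = x"
  using tot[of x y] by (auto simp: add.commute)

lemma le_mult: "(x::'a) + y = y \<Longrightarrow> x * z + y * z = y * z"
  by (metis distrib_right)

lemma le_trans': "(x::'a) + y = y \<Longrightarrow> y + z = z \<Longrightarrow> x + z = z"
  by (metis add.assoc)

lemma le_zero: "(x::'a) + 0 = 0 \<Longrightarrow> x = 0" by simp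

lemma sum_le: "finite A \<Longrightarrow> (\<And>i. i \<in> A \<Longrightarrow> f i + (x::'a) = x) \<Longrightarrow> sum f A + x = x"
proof (induction A rule: finite_induct)
  case empty then show ?case by simp
next
  case (insert i A)
  then have "sum f A + x = x" by auto
  moreover have "f i + x = x" using insert by auto
  ultimately show ?case using insert by (simp add: add.assoc)
qed

lemma member_le: "finite A \<Longrightarrow> i \<in> A \<Longrightarrow> f i + sum f A = (sum f A :: 'a)"
  by (metis add.assoc idem sum.remove)

lemma sum_attains: "finite A \<Longrightarrow> A \<noteq> {} \<Longrightarrow> \<exists>i\<in>A. sum f A = (f i :: 'a)"
proof (induction A rule: finite_ne_induct)
  case (singleton x) then show ?case by simp
next
  case (insert x F)
  then obtain i where i: "i \<in> F" "sum f F = f i" by auto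
  have "f x + f i = f i \<or> f x + f i = f x" by (rule tot2)
  then show ?case using insert i by auto
qed

lemma poly_idem[simp]: "(p::'a poly) + p = p"
  by (simp add: poly_eq_iff)

definition cc :: "'a poly \<Rightarrow> nat \<Rightarrow> 'a" where
  "cc W m = coeff W m * a ^ (m div n)"

definition val :: "nat \<Rightarrow> 'a poly \<Rightarrow> 'a" where
  "val r W = coeff (phi n a W) r"

lemma phi_bound: "degree W \<le> D \<Longrightarrow>
   phi n a W = (\<Sum>m\<le>D. monom (coeff W m * a ^ (m div n)) (m mod n))"
  unfolding phi_def
  by (rule sum.mono_neutral_left) (auto simp: coeff_eq_0)

lemma val_bound: "degree W \<le> D \<Longrightarrow>
   val r W = (\<Sum>m\<le>D. if m mod n = r then cc W m else 0)"
  unfolding val_def cc_def by (simp add: phi_bound coeff_sum)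

lemma cc_le: "cc W m + val (m mod n) W = val (m mod n) W"
proof -
  let ?D = "max m (degree W)"
  have "val (m mod n) W = (\<Sum>j\<le>?D. if j mod n = m mod n then cc W j else 0)"
    by (rule val_bound) simp
  moreover have "(\<lambda>j. if j mod n = m mod n then cc W j else 0) m = cc W m" by simp
  ultimately show ?thesis using member_le[of "{..?D}" m "\<lambda>j. if j mod n = m mod n then cc W j else 0"]
    by simp
qed

lemma val_add: "val r (A + B) = val r A + val r B"
proof -
  let ?D = "max (degree A) (degree B)"
  have "degree (A+B) \<le> ?D" by (rule degree_add_le) auto
  then show ?thesis
    by (auto simp: val_bound[of _ ?D] cc_def sum.distrib[symmetric] distrib_right intro!: sum.cong)
qed

lemma val_smult: "val r (smult c W) = c * val r W"
proof -
  have "degree (smult c W) \<le> degree W" by (rule degree_smult_le)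
  then show ?thesis
    by (auto simp: val_bound[of _ "degree W"] cc_def sum_distrib_left mult.assoc intro!: sum.cong)
qed

lemma val_0[simp]: "val r 0 = 0"
  by (simp add: val_def phi_def)

lemma val_sum: "finite I \<Longrightarrow> val r (\<Sum>i\<in>I. f i) = (\<Sum>i\<in>I. val r (f i))"
  by (induction I rule: finite_induct) (auto simp: val_add)

lemma n0: "n > 0" using n1 by simp

lemma val_shift: "val r (monom 1 (n*q) * Y) = a^q * val r Y"
proof -
  let ?d = "degree Y"
  let ?D = "n*q + ?d"
  have deg: "degree (monom 1 (n*q) * Y) \<le> ?D"
    using degree_mult_le[of "monom 1 (n*q)" Y] degree_monom_le[of "1::'a" "n*q"] by linarith
  let ?g = "\<lambda>m. if m mod n = r then cc (monom 1 (n*q) * Y) m else 0"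
  have "val r (monom 1 (n*q) * Y) = (\<Sum>m\<le>?D. ?g m)" by (rule val_bound[OF deg])
  also have "\<dots> = (\<Sum>m\<in>(\<lambda>i. i + n*q) ` {..?d}. ?g m)"
  proof (rule sum.mono_neutral_right)
    show "(\<lambda>i. i + n*q) ` {..?d} \<subseteq> {..?D}" by auto
    show "\<forall>i\<in>{..?D} - (\<lambda>i. i + n*q) ` {..?d}. ?g i = 0"
    proof
      fix m assume m: "m \<in> {..?D} - (\<lambda>i. i + n*q) ` {..?d}"
      have "m < n*q"
      proof (rule ccontr)
        assume "\<not> m < n*q"
        then have "m = (m - n*q) + n*q" "m - n*q \<le> ?d" using m by auto
        then show False using m by (metis DiffD2 atMost_iff imageI)
      qed
      then show "?g m = 0" by (simp add: cc_def coeff_monom_mult)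
    qed
  qed simp
  also have "\<dots> = (\<Sum>i\<le>?d. ?g (i + n*q))" by (subst sum.reindex) (auto simp: inj_on_def)
  also have "\<dots> = (\<Sum>i\<le>?d. a^q * (if i mod n = r then cc Y i else 0))"
  proof (rule sum.cong)
    fix i
    have "(i + n*q) div n = i div n + q" using n0 by simp
    moreover have "(i + n*q) mod n = i mod n" by simp
    moreover have "coeff (monom 1 (n*q) * Y) (i + n*q) = coeff Y i" by (simp add: coeff_monom_mult)
    ultimately show "?g (i + n*q) = a^q * (if i mod n = r then cc Y i else 0)"
      unfolding cc_def by (simp add: power_add mult_ac)
  qed simp
  also have "\<dots> = a^q * val r Y" by (simp add: val_bound[of Y ?d] sum_distrib_left)
  finally show ?thesis .
qed

lemma val_monom_mult: "val r (monom c m * U) = c * a^(m div n) * val r (monom 1 (m mod n) * U)"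
proof -
  have "monom c m = smult c (monom 1 (n*(m div n)) * monom 1 (m mod n))"
    by (simp add: mult_monom smult_monom)
  then have "monom c m * U = smult c (monom 1 (n*(m div n)) * (monom 1 (m mod n) * U))"
    by (simp add: mult.assoc)
  then show ?thesis by (simp add: val_smult val_shift mult.assoc)
qed

lemma val_mult: "val r (P * U) = (\<Sum>s<n. val s P * val r (monom 1 s * U))"
proof -
  let ?d = "degree P"
  let ?h = "\<lambda>s. val r (monom 1 s * U)"
  have "P * U = (\<Sum>m\<le>?d. monom (coeff P m) m * U)"
    by (metis poly_as_sum_of_monoms sum_distrib_right)
  moreover have "\<And>m. val r (monom (coeff P m) m * U) = cc P m * ?h (m mod n)"
    unfolding cc_def by (rule val_monom_mult)
  ultimately have "val r (P * U) = (\<Sum>m\<le>?d. cc P m * ?h (m mod n))"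
    by (simp add: val_sum)
  also have "\<dots> = (\<Sum>m\<le>?d. \<Sum>s<n. if m mod n = s then cc P m * ?h s else 0)"
  proof (rule sum.cong)
    fix m
    have "m mod n \<in> {..<n}" using n0 by simp
    then show "cc P m * ?h (m mod n) = (\<Sum>s<n. if m mod n = s then cc P m * ?h s else 0)"
      by (simp add: sum.delta)
  qed simp
  also have "\<dots> = (\<Sum>s<n. \<Sum>m\<le>?d. if m mod n = s then cc P m * ?h s else 0)"
    by (rule sum.swap)
  also have "\<dots> = (\<Sum>s<n. val s P * ?h s)"
  proof (rule sum.cong)
    fix s
    have e: "\<And>c x y. (if c then x else 0) * (y::'a) = (if c then x*y else 0)" by simp
    show "(\<Sum>m\<le>?d. if m mod n = s then cc P m * ?h s else 0) = val s P * ?h s"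
      by (simp add: val_bound[of P ?d] sum_distrib_right e)
  qed simp
  finally show ?thesis .
qed

definition Char :: "'a poly \<Rightarrow> bool" where
  "Char W \<longleftrightarrow> (\<forall>r<n. \<exists>m1 m2. m1 \<noteq> m2 \<and> m1 mod n = r \<and> m2 mod n = r \<and>
      cc W m1 = val r W \<and> cc W m2 = val r W)"

lemma cc_add: "cc (A + B) m = cc A m + cc B m"
  by (simp add: cc_def distrib_right)

lemma cc_smult: "cc (smult c A) m = c * cc A m"
  by (simp add: cc_def mult.assoc)

lemma cc_le': "m mod n = r \<Longrightarrow> cc W m + val r W = val r W"
  using cc_le by blast

lemma exists_max: "r < n \<Longrightarrow> \<exists>m. m mod n = r \<and> cc W m = val r W"
proof -
  assume rn: "r < n"
  let ?D = "degree W"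
  let ?g = "\<lambda>m. if m mod n = r then cc W m else 0"
  have v: "val r W = (\<Sum>m\<le>?D. ?g m)" by (rule val_bound) simp
  obtain m0 where m0: "m0 \<in> {..?D}" "(\<Sum>m\<le>?D. ?g m) = ?g m0"
    using sum_attains[of "{..?D}" ?g] by auto
  show ?thesis
  proof (cases "m0 mod n = r")
    case True then show ?thesis using v m0 by auto
  next
    case False
    then have z: "val r W = 0" using v m0 by auto
    let ?m = "n * Suc ?D + r"
    have "Suc ?D \<le> n * Suc ?D" using n1 mult_le_mono1[of 1 n "Suc ?D"] by simp
    then have "?m > ?D" by linarith
    then have "coeff W ?m = 0" by (simp add: coeff_eq_0)
    moreover have "?m mod n = r" using rn by (simp only: mod_mult_self3 add.commute[of "n * Suc ?D"] mod_mult_self2 mod_less)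
    ultimately show ?thesis using z by (auto simp: cc_def)
  qed
qed

lemma Char_0: "Char 0"
  unfolding Char_def
proof (intro allI impI)
  fix r assume "r < n"
  then show "\<exists>m1 m2. m1 \<noteq> m2 \<and> m1 mod n = r \<and> m2 mod n = r \<and> cc 0 m1 = val r 0 \<and> cc 0 m2 = val r 0"
    using n0 by (intro exI[of _ r] exI[of _ "r + n"]) (auto simp: cc_def)
qed

lemma Char_add: "Char A \<Longrightarrow> Char B \<Longrightarrow> Char (A + B)"
  unfolding Char_def
proof (intro allI impI)
  fix r assume A: "\<forall>r<n. \<exists>m1 m2. m1 \<noteq> m2 \<and> m1 mod n = r \<and> m2 mod n = r \<and> cc A m1 = val r A \<and> cc A m2 = val r A"
    and B: "\<forall>r<n. \<exists>m1 m2. m1 \<noteq> m2 \<and> m1 mod n = r \<and> m2 mod n = r \<and> cc B m1 = val r B \<and> cc B m2 = val r B"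
    and r: "r < n"
  show "\<exists>m1 m2. m1 \<noteq> m2 \<and> m1 mod n = r \<and> m2 mod n = r \<and> cc (A + B) m1 = val r (A + B) \<and> cc (A + B) m2 = val r (A + B)"
  proof (cases "val r A + val r B = val r B")
    case True
    obtain m1 m2 where m: "m1 \<noteq> m2" "m1 mod n = r" "m2 mod n = r" "cc B m1 = val r B" "cc B m2 = val r B"
      using B r by blast
    have "cc A m1 + val r B = val r B" "cc A m2 + val r B = val r B"
      using le_trans'[OF cc_le'[OF m(2)] True] le_trans'[OF cc_le'[OF m(3)] True] by auto
    then show ?thesis using m True by (intro exI[of _ m1] exI[of _ m2]) (auto simp: cc_add val_add)
  next
    case False
    then have T: "val r B + val r A = val r A" using tot2[of "val r A" "val r B"] by (auto simp: add.commute)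
    obtain m1 m2 where m: "m1 \<noteq> m2" "m1 mod n = r" "m2 mod n = r" "cc A m1 = val r A" "cc A m2 = val r A"
      using A r by blast
    have "cc B m1 + val r A = val r A" "cc B m2 + val r A = val r A"
      using le_trans'[OF cc_le'[OF m(2)] T] le_trans'[OF cc_le'[OF m(3)] T] by auto
    then show ?thesis using m T by (intro exI[of _ m1] exI[of _ m2]) (auto simp: cc_add val_add add.commute)
  qed
qed

lemma Char_gen: "1 \<le> k \<Longrightarrow> Char (F * (monom 1 (n*k) + [:a^k:]))"
proof -
  assume k: "1 \<le> k"
  let ?G = "monom 1 (n*k) * F" and ?S = "smult (a^k) F"
  have e: "F * (monom 1 (n*k) + [:a^k:]) = ?G + ?S" by (simp add: algebra_simps)
  show ?thesis unfolding e Char_def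
  proof (intro allI impI)
    fix r assume r: "r < n"
    obtain m where m: "m mod n = r" "cc F m = val r F" using exists_max[OF r] by blast
    let ?H = "val r F"
    have vG: "val r ?G = a^k * ?H" by (rule val_shift)
    have vS: "val r ?S = a^k * ?H" by (rule val_smult)
    have v: "val r (?G + ?S) = a^k * ?H" using vG vS by (simp add: val_add)
    have nk: "n*k \<ge> 1" using n1 k by simp
    have c1: "cc (?G + ?S) m = a^k * ?H"
      using cc_le'[OF m(1), of ?G] vG m(2) by (simp add: cc_add cc_smult)
    have "coeff ?G (m + n*k) = coeff F m" by (simp add: coeff_monom_mult)
    moreover have "(m + n*k) div n = m div n + k" using n0 by simp
    ultimately have "cc ?G (m + n*k) = coeff F m * a^(m div n + k)" by (simp add: cc_def)
    also have "\<dots> = a^k * cc F m" by (simp add: cc_def power_add mult_ac)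
    finally have g2: "cc ?G (m + n*k) = a^k * ?H" using m(2) by simp
    have m2: "(m + n*k) mod n = r" using m(1) by simp
    have c2: "cc (?G + ?S) (m + n*k) = a^k * ?H"
      using cc_le'[OF m2, of ?S] vS g2 by (simp add: cc_add add.commute)
    show "\<exists>m1 m2. m1 \<noteq> m2 \<and> m1 mod n = r \<and> m2 mod n = r \<and> cc (?G + ?S) m1 = val r (?G + ?S) \<and> cc (?G + ?S) m2 = val r (?G + ?S)"
      using c1 c2 v m(1) m2 nk by (intro exI[of _ m] exI[of _ "m + n*k"]) auto
  qed
qed

abbreviation Gens where "Gens \<equiv> {monom 1 (n * k) + [:a ^ k:] | k. k \<ge> 1}"

lemma J_Char: "W \<in> Jideal n a \<Longrightarrow> Char W"
proof -
  assume "W \<in> Jideal n a"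
  then obtain N and F g :: "nat \<Rightarrow> 'a poly" where g: "\<forall>i<N. g i \<in> Gens" and W: "W = (\<Sum>i<N. F i * g i)"
    unfolding Jideal_def gen_ideal_sr_def by blast
  have "(\<forall>i<N. g i \<in> Gens) \<longrightarrow> Char (\<Sum>i<N. F i * g i)"
  proof (induction N)
    case 0 then show ?case by (simp add: Char_0)
  next
    case (Suc N)
    show ?case
    proof
      assume h: "\<forall>i<Suc N. g i \<in> Gens"
      then obtain k where "k \<ge> 1" "g N = monom 1 (n * k) + [:a ^ k:]" by blast
      then have "Char (F N * g N)" using Char_gen by simp
      moreover have "Char (\<Sum>i<N. F i * g i)" using Suc h by simp
      ultimately show "Char (\<Sum>i<Suc N. F i * g i)" by (simp add: Char_add)
    qed
  qed
  then show ?thesis using g W by simp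
qed

lemma J_mult: "W \<in> Jideal n a \<Longrightarrow> P * W \<in> Jideal n a"
proof -
  assume "W \<in> Jideal n a"
  then obtain N and F g :: "nat \<Rightarrow> 'a poly" where g: "\<forall>i<N. g i \<in> Gens" and W: "W = (\<Sum>i<N. F i * g i)"
    unfolding Jideal_def gen_ideal_sr_def by blast
  have "P * W = (\<Sum>i<N. (P * F i) * g i)" by (simp add: W sum_distrib_left mult.assoc)
  then show ?thesis unfolding Jideal_def gen_ideal_sr_def mem_Collect_eq using g
    by (intro exI[of _ N] exI[of _ "\<lambda>i. P * F i"] exI[of _ g]) simp
qed

lemma Char_transfer:
  assumes A: "Char A" and B: "Char B" and v: "\<And>r. r < n \<Longrightarrow> val r A = val r B"
    and AV: "Char (A + V)"
  shows "Char (B + V)"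
  unfolding Char_def
proof (intro allI impI)
  fix r assume r: "r < n"
  show "\<exists>m1 m2. m1 \<noteq> m2 \<and> m1 mod n = r \<and> m2 mod n = r \<and> cc (B + V) m1 = val r (B + V) \<and> cc (B + V) m2 = val r (B + V)"
  proof (cases "val r V + val r B = val r B")
    case True
    obtain m1 m2 where m: "m1 \<noteq> m2" "m1 mod n = r" "m2 mod n = r" "cc B m1 = val r B" "cc B m2 = val r B"
      using B r unfolding Char_def by blast
    have "cc V m1 + val r B = val r B" "cc V m2 + val r B = val r B"
      using le_trans'[OF cc_le'[OF m(2)] True] le_trans'[OF cc_le'[OF m(3)] True] by auto
    then show ?thesis using m True by (intro exI[of _ m1] exI[of _ m2]) (auto simp: cc_add val_add add.commute)
  next
    case False
    have vab: "val r A = val r B" using v r by simp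
    have T: "val r B + val r V = val r V" using tot2[of "val r V" "val r B"] False by (auto simp: add.commute)
    obtain m1 m2 where m: "m1 \<noteq> m2" "m1 mod n = r" "m2 mod n = r" "cc (A+V) m1 = val r (A+V)" "cc (A+V) m2 = val r (A+V)"
      using AV r unfolding Char_def by blast
    have key: "cc V m = val r V" if mm: "m mod n = r" "cc (A+V) m = val r (A+V)" for m
    proof -
      have s: "cc A m + cc V m = val r V" using mm T vab by (simp add: cc_add val_add)
      have "cc A m + cc V m = cc V m \<or> cc A m + cc V m = cc A m" by (rule tot2)
      then show ?thesis
      proof
        assume "cc A m + cc V m = cc A m"
        then have "cc A m = val r V" using s by simp
        then have "val r V + val r B = val r B" using cc_le'[OF mm(1), of A] vab by simp
        then show ?thesis using False by simp
      qed (use s in simp)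
    qed
    have k1: "cc V m1 = val r V" using key m(2,4) by blast
    have k2: "cc V m2 = val r V" using key m(3,5) by blast
    have "cc B m1 + val r V = val r V" "cc B m2 + val r V = val r V"
      using le_trans'[OF cc_le'[OF m(2)] T] le_trans'[OF cc_le'[OF m(3)] T] by auto
    then show ?thesis using m k1 k2 T by (intro exI[of _ m1] exI[of _ m2]) (auto simp: cc_add val_add)
  qed
qed

lemma Gens_mem: "1 \<le> k \<Longrightarrow> monom 1 (n * k) + [:a ^ k:] \<in> Gens" by blast

lemma J_intro: fixes N :: nat and F g :: "nat \<Rightarrow> 'a poly" shows "(\<And>i. i < N \<Longrightarrow> g i \<in> Gens) \<Longrightarrow> (\<Sum>i<N. F i * g i) \<in> Jideal n a"
  unfolding Jideal_def gen_ideal_sr_def mem_Collect_eq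
  apply (rule exI[where x=N])
  apply (rule exI[where x=F])
  apply (rule exI[where x=g])
  by simp

lemma Char_J_0: assumes a0: "a = 0" and C: "Char W" shows "W \<in> Jideal n a"
proof -
  have low: "coeff W r = 0" if r: "r < n" for r
  proof -
    obtain m1 m2 where m: "m1 \<noteq> m2" "m1 mod n = r" "m2 mod n = r" "cc W m1 = val r W" "cc W m2 = val r W"
      using C r unfolding Char_def by blast
    have "\<exists>m. m mod n = r \<and> n \<le> m \<and> cc W m = val r W"
    proof (cases "n \<le> m1")
      case True then show ?thesis using m by blast
    next
      case False
      then have "m1 = r" using m(2) by simp
      then have "n \<le> m2" using m by (metis mod_less not_le)
      then show ?thesis using m by blast
    qed
    then obtain m where mm: "m mod n = r" "n \<le> m" "cc W m = val r W" by blast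
    have "m div n \<noteq> 0" using mm(2) n0 div_greater_zero_iff[of m n] by simp
    then have "cc W m = 0" unfolding cc_def using a0 by (simp add: power_0_left)
    then have "val r W = 0" using mm(3) by simp
    moreover have "cc W r + val r W = val r W" using cc_le'[of r r W] r by simp
    ultimately show ?thesis using r by (simp add: cc_def)
  qed
  let ?d = "degree W"
  define F where "F i = (if n \<le> i then monom (coeff W i) (i - n) else 0)" for i
  define g where "g (i::nat) = monom 1 (n * 1) + [:a ^ 1:]" for i
  have "F i * g i = monom (coeff W i) i" for i
    using low[of i] by (auto simp: F_def g_def a0 mult_monom)
  then have "(\<Sum>i<Suc ?d. F i * g i) = W"
    by (simp add: lessThan_Suc_atMost poly_as_sum_of_monoms)
  moreover have "(\<Sum>i<Suc ?d. F i * g i) \<in> Jideal n a"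
    by (rule J_intro) (unfold g_def, rule Gens_mem, simp)
  ultimately show ?thesis by simp
qed

end

context QF begin
lemma Char_J_nz: assumes a0: "a \<noteq> 0" and C: "Char W" shows "W \<in> Jideal n a"
proof -
  obtain b where ab: "a * b = 1" using invx[OF a0] by blast
  have ex: "\<forall>r. \<exists>m1. \<exists>m2. r < n \<longrightarrow> m1 \<noteq> m2 \<and> m1 mod n = r \<and> m2 mod n = r \<and> cc W m1 = val r W \<and> cc W m2 = val r W"
    using C unfolding Char_def by blast
  obtain p1 where "\<forall>r. \<exists>m2. r < n \<longrightarrow> p1 r \<noteq> m2 \<and> p1 r mod n = r \<and> m2 mod n = r \<and> cc W (p1 r) = val r W \<and> cc W m2 = val r W"
    using choice[OF ex] by (rule exE)
  from choice[OF this] obtain p2 where P: "\<forall>r. r < n \<longrightarrow> p1 r \<noteq> p2 r \<and> p1 r mod n = r \<and> p2 r mod n = r \<and> cc W (p1 r) = val r W \<and> cc W (p2 r) = val r W"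
    by (rule exE)
  define p where "p m = (if p1 (m mod n) \<noteq> m then p1 (m mod n) else p2 (m mod n))" for m
  have pm: "p m \<noteq> m \<and> p m mod n = m mod n \<and> cc W (p m) = val (m mod n) W" for m
  proof -
    have "m mod n < n" using n0 by simp
    then have h: "p1 (m mod n) \<noteq> p2 (m mod n) \<and> p1 (m mod n) mod n = m mod n \<and> p2 (m mod n) mod n = m mod n \<and> cc W (p1 (m mod n)) = val (m mod n) W \<and> cc W (p2 (m mod n)) = val (m mod n) W"
      using P by blast
    show ?thesis unfolding p_def using h by (cases "p1 (m mod n) = m") auto
  qed
  have qne: "p m div n \<noteq> m div n" for m
  proof
    assume "p m div n = m div n"
    then have "n * (p m div n) + p m mod n = n * (m div n) + m mod n" using pm[of m] by simp
    then show False using pm[of m] mult_div_mod_eq[of n "p m"] by simp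
  qed
  define k where "k m = (if p m div n < m div n then m div n - p m div n else p m div n - m div n)" for m
  have k1: "1 \<le> k m" for m using qne[of m] unfolding k_def by auto
  define e where "e m = (if p m div n < m div n then coeff W m * a^(k m) else coeff W m * b^(k m))" for m
  define F where "F m = (if p m div n < m div n then monom (coeff W m) (p m) else monom (coeff W m * b^(k m)) m)" for m
  define g where "g m = monom 1 (n * k m) + [:a^(k m):]" for m
  have dm: "n * (m div n) + m mod n = m" "n * (p m div n) + m mod n = p m" for m
    using pm[of m] mult_div_mod_eq[of n m] mult_div_mod_eq[of n "p m"] by simp_all
  have T: "F m * g m = monom (coeff W m) m + monom (e m) (p m)" for m
  proof (cases "p m div n < m div n")
    case True
    have "n * k m = n * (m div n) - n * (p m div n)" using True by (simp add: k_def diff_mult_distrib2)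
    moreover have "n * (p m div n) \<le> n * (m div n)" using True by simp
    ultimately have "p m + n * k m = m" using dm[of m] by linarith
    then show ?thesis using True
      by (simp add: F_def g_def e_def distrib_left mult_monom smult_monom mult.commute add.commute)
  next
    case False
    then have lt: "m div n < p m div n" using qne[of m] by simp
    have "n * k m = n * (p m div n) - n * (m div n)" using False by (simp add: k_def diff_mult_distrib2)
    moreover have "n * (m div n) \<le> n * (p m div n)" using lt by simp
    ultimately have "m + n * k m = p m" using dm[of m] by linarith
    moreover have "coeff W m * b ^ k m * a ^ k m = coeff W m"
      by (metis ab mult.assoc mult.commute mult.right_neutral power_mult_distrib power_one)
    ultimately show ?thesis using False
      by (simp add: F_def g_def e_def distrib_left mult_monom smult_monom mult.commute add.commute)
  qed
  have ebound: "e m + coeff W (p m) = coeff W (p m)" for m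
  proof -
    let ?A = "a ^ (p m div n)" and ?B = "b ^ (p m div n)"
    have AB: "?A * ?B = 1" by (metis ab power_mult_distrib power_one)
    have e1: "e m * ?A = cc W m"
    proof (cases "p m div n < m div n")
      case True
      then have "k m + p m div n = m div n" by (simp add: k_def)
      then show ?thesis using True by (simp add: e_def cc_def mult.assoc power_add[symmetric])
    next
      case False
      then have lt: "m div n < p m div n" using qne[of m] by simp
      then have "p m div n = k m + m div n" by (simp add: k_def)
      then have "e m * ?A = coeff W m * (b^(k m) * a^(k m)) * a^(m div n)"
        using False by (simp add: e_def power_add mult_ac)
      also have "b^(k m) * a^(k m) = 1" by (metis ab mult.commute power_mult_distrib power_one)
      finally show ?thesis by (simp add: cc_def)
    qed
    have "cc W m + val (m mod n) W = val (m mod n) W" by (rule cc_le)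
    then have "e m * ?A + coeff W (p m) * ?A = coeff W (p m) * ?A"
      using e1 pm[of m] by (simp add: cc_def)
    then have "(e m * ?A + coeff W (p m) * ?A) * ?B = coeff W (p m) * ?A * ?B" by simp
    then show ?thesis using AB by (simp add: distrib_right mult.assoc)
  qed
  let ?d = "degree W"
  let ?E = "\<Sum>m\<le>?d. monom (e m) (p m)"
  have sumT: "(\<Sum>m\<le>?d. F m * g m) = W + ?E"
    by (simp add: T sum.distrib poly_as_sum_of_monoms)
  have WE: "W + ?E = W"
  proof (rule poly_eqI)
    fix j
    have "(\<Sum>m\<le>?d. if p m = j then e m else 0) + coeff W j = coeff W j"
      by (rule sum_le) (use ebound in auto)
    then show "coeff (W + ?E) j = coeff W j" by (simp add: coeff_sum add.commute)
  qed
  have "(\<Sum>m<Suc ?d. F m * g m) \<in> Jideal n a"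
    by (rule J_intro) (unfold g_def, rule Gens_mem, rule k1)
  then show ?thesis using sumT WE by (simp add: lessThan_Suc_atMost)
qed

lemma Char_J: "Char W \<Longrightarrow> W \<in> Jideal n a"
  using Char_J_0 Char_J_nz by blast

end

context QF begin

lemma poly_idem2: "(p::'a poly) + (p + q) = p + q"
  by (metis add.assoc poly_idem)

lemma alg:
  fixes x y lP hP aP lQ hQ aQ :: "'a poly"
  assumes x: "x = lP + hP" and y: "y = lQ + hQ" and e: "lP + aP = lQ + aQ"
  shows "x + (hP + aP + (hQ + aQ)) = y + (hP + aP + (hQ + aQ))"
proof -
  have "x + (hP + aP + (hQ + aQ)) = (lP + aP) + aQ + (hP + hQ)"
    unfolding x by (simp add: ac_simps poly_idem2)
  also have "\<dots> = (lQ + aQ) + aQ + (hP + hQ)" by (simp only: e)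
  also have "\<dots> = (lQ + aQ) + (hP + hQ)" by (simp add: add.assoc)
  also have "\<dots> = (lP + aP) + (hP + hQ)" by (simp only: e)
  finally have 1: "x + (hP + aP + (hQ + aQ)) = (lP + aP) + (hP + hQ)" .
  have "y + (hP + aP + (hQ + aQ)) = (lQ + aQ) + aP + (hP + hQ)"
    unfolding y by (simp add: ac_simps poly_idem2)
  also have "\<dots> = (lP + aP) + aP + (hP + hQ)" by (simp only: e)
  also have "\<dots> = (lP + aP) + (hP + hQ)" by (simp add: add.assoc)
  finally show ?thesis using 1 by simp
qed

lemma part1:
  assumes ph: "phi n a P = phi n a Q"
  shows "\<exists>U\<in>Jideal n a. \<exists>V\<in>Jideal n a. P + U = Q + V"
proof -
  let ?D = "max (degree P) (degree Q)"
  define lowf where "lowf W = (\<Sum>m\<le>?D. if m < n then monom (coeff W m) m else 0)" for W :: "'a poly"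
  define highf where "highf W = (\<Sum>m\<le>?D. if m < n then 0 else monom (coeff W m) m)" for W :: "'a poly"
  define AAf where "AAf W = (\<Sum>m\<le>?D. if m < n then 0 else monom (coeff W m * a ^ (m div n)) (m mod n))" for W :: "'a poly"
  have spl: "W = lowf W + highf W" if "degree W \<le> ?D" for W :: "'a poly"
  proof -
    have "W = (\<Sum>m\<le>?D. monom (coeff W m) m)" using poly_as_sum_of_monoms'[OF that] by simp
    also have "\<dots> = lowf W + highf W"
      unfolding lowf_def highf_def sum.distrib[symmetric] by (rule sum.cong) auto
    finally show ?thesis .
  qed
  have phs: "phi n a W = lowf W + AAf W" if "degree W \<le> ?D" for W :: "'a poly"
  proof -
    have "phi n a W = (\<Sum>m\<le>?D. monom (coeff W m * a ^ (m div n)) (m mod n))" by (rule phi_bound[OF that])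
    also have "\<dots> = lowf W + AAf W"
      unfolding lowf_def AAf_def sum.distrib[symmetric] by (rule sum.cong) auto
    finally show ?thesis .
  qed
  define FF where "FF i = (if n \<le> i then monom (coeff P i) (i mod n) + monom (coeff Q i) (i mod n) else 0)" for i
  define gg where "gg i = monom 1 (n * max 1 (i div n)) + [:a ^ (max 1 (i div n)):]" for i
  have fg: "FF i * gg i = (if i < n then 0 else monom (coeff P i) i + monom (coeff P i * a ^ (i div n)) (i mod n))
     + (if i < n then 0 else monom (coeff Q i) i + monom (coeff Q i * a ^ (i div n)) (i mod n))" for i
  proof (cases "i < n")
    case True then show ?thesis by (simp add: FF_def)
  next
    case False
    then have "i div n \<ge> 1" using n0 div_greater_zero_iff[of i n] by simp
    then have mx: "max (Suc 0) (i div n) = i div n" by simp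
    have im: "i mod n + n * (i div n) = i" by (simp add: add.commute)
    show ?thesis using False
      by (simp add: FF_def gg_def mx distrib_left distrib_right mult_monom smult_monom im mult.commute ac_simps)
  qed
  define U where "U = (\<Sum>i<Suc ?D. FF i * gg i)"
  have UJ: "U \<in> Jideal n a" unfolding U_def
    by (rule J_intro) (unfold gg_def, rule Gens_mem, simp)
  have Ueq: "U = highf P + AAf P + (highf Q + AAf Q)"
    unfolding U_def fg lessThan_Suc_atMost highf_def AAf_def sum.distrib[symmetric]
    by (rule sum.cong) auto
  have dP: "degree P \<le> ?D" and dQ: "degree Q \<le> ?D" by auto
  have pP: "phi n a P = lowf P + AAf P" by (rule phs[OF dP])
  have pQ: "phi n a Q = lowf Q + AAf Q" by (rule phs[OF dQ])
  have "P + U = Q + U" unfolding Ueq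
    by (rule alg[OF spl[OF dP] spl[OF dQ]]) (use pP pQ ph in simp)
  then show ?thesis using UJ by auto
qed

lemma part2:
  assumes ph: "phi n a P = phi n a Q" and U: "U \<in> Jideal n a" and PV: "P * U + V \<in> Jideal n a"
  shows "Q * U + V \<in> Jideal n a"
proof -
  have A: "Char (P * U)" by (rule J_Char[OF J_mult[OF U]])
  have B: "Char (Q * U)" by (rule J_Char[OF J_mult[OF U]])
  have vs: "val s P = val s Q" for s using ph by (simp add: val_def)
  have v: "val r (P * U) = val r (Q * U)" for r unfolding val_mult[of r P] val_mult[of r Q] vs ..
  have "Char (Q * U + V)" by (rule Char_transfer[OF A B v J_Char[OF PV]])
  then show ?thesis by (rule Char_J)
qed

end

theorem lemma3p5:
  fixes a :: "'a::comm_semiring_1" and n :: nat and P Q :: "'a poly"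
  assumes "quasi_field_char1 TYPE('a)"
    and "totally_ordered_sr TYPE('a)"
    and "n \<ge> 1"
    and "phi n a P = phi n a Q"
  shows "cong_ideal (Jideal n a) P Q"
proof -
  interpret QF n a
    using assms(1-3) unfolding quasi_field_char1_def totally_ordered_sr_def sr_le_def
    by unfold_locales (auto simp: add.commute)
  have sym: "phi n a Q = phi n a P" using assms(4) by simp
  show ?thesis unfolding cong_ideal_def
    using part1[OF assms(4)] part2[OF assms(4)] part2[OF sym] by blast
qed

end
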